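(* Assume $\mu_1>\mu_a$ for all $a\in\{2,\dots,K\}$ and $c_1,\dots,c_K>0$. The optimal proportion $\boldsymbol{w}^*=(w_1^*,\dots,w_K^* )$ is given by \[ w_a^*=\frac{c_a\,x_a(y^* )}{c_1+c_2x_2(y^* )+\cdots+c_Kx_K(y^* )},\qquad a\in\{1,\dots,K\}, \] with the convention $x_1(y)\equiv1$, where $y^*$ is the unique solution of $F_{\boldsymbol{\mu},\boldsymbol{c}}(y)=1$ for \[ F_{\boldsymbol{\mu},\boldsymbol{c}}(y)=\sum_{a=2}^K\frac{c_a\,d\!\left(\mu_1,\frac{\mu_1+x_a(y)\mu_a}{1+x_a(y)}\right)}{c_1\,d\!\left(\mu_a,\frac{\mu_1+x_a(y)\mu_a}{1+x_a(y)}\right)}. \]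
   Context: Rewards belong to a one-parameter natural exponential family parametrized by the mean; $d(\mu,\mu')$ is the KL divergence between members with means $\mu,\mu'$. $\Sigma_K$ is the probability simplex. $\boldsymbol{w}^*$ is the maximizer over $\boldsymbol{w}\in\Sigma_K$ of $\inf_{\boldsymbol{\lambda}:a^*(\boldsymbol{\lambda})\neq1}\sum_a\frac{w_a}{c_a}d(\mu_a,\lambda_a)$, where $\boldsymbol\lambda$ ranges over mean vectors of the family whose unique best arm is not arm $1$. For $\alpha\in[0,1]$, $I_\alpha(x,y)=\alpha d(x,\alpha x+(1-\alpha)y)+(1-\alpha)d(y,\alpha x+(1-\alpha)y)$; for $a\ge2$, $g_a(x)=(1+x)I_{1/(1+x)}(\mu_1,\mu_a)$, a strictly increasing bijection $[0,\infty)\to[0,d(\mu_1,\mu_a))$, and $x_a=g_a^{-1}:[0,d(\mu_1,\mu_a))\to[0,\infty)$. *)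

theory Defs
  imports "HOL-Analysis.Analysis"
begin

text \<open>One-parameter natural exponential family, described through its cumulant
  (log-partition) function b on the open natural-parameter interval Theta,
  with first derivative b' (the mean map) and positive second derivative
  (the variance). The means form the set b' ` Theta.\<close>

definition nef_cumulant :: "real set \<Rightarrow> (real \<Rightarrow> real) \<Rightarrow> (real \<Rightarrow> real) \<Rightarrow> bool" where
  "nef_cumulant Theta b b' \<longleftrightarrow>
     open Theta \<and> is_interval Theta \<and> Theta \<noteq> {} \<and>
     (\<forall>\<theta>\<in>Theta. (b has_real_derivative b' \<theta>) (at \<theta>)) \<and>
     (\<forall>\<theta>\<in>Theta. \<exists>v. (b' has_real_derivative v) (at \<theta>) \<and> v > 0)"

definition natpar :: "real set \<Rightarrow> (real \<Rightarrow> real) \<Rightarrow> real \<Rightarrow> real" where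
  "natpar Theta b' m = (THE \<theta>. \<theta> \<in> Theta \<and> b' \<theta> = m)"

definition nef_kl :: "real set \<Rightarrow> (real \<Rightarrow> real) \<Rightarrow> (real \<Rightarrow> real) \<Rightarrow> real \<Rightarrow> real \<Rightarrow> real" where
  "nef_kl Theta b b' m m' =
     b (natpar Theta b' m') - b (natpar Theta b' m) - (natpar Theta b' m' - natpar Theta b' m) * m"

definition I_alpha :: "(real \<Rightarrow> real \<Rightarrow> real) \<Rightarrow> real \<Rightarrow> real \<Rightarrow> real \<Rightarrow> real" where
  "I_alpha d \<alpha> x y = \<alpha> * d x (\<alpha> * x + (1 - \<alpha>) * y) + (1 - \<alpha>) * d y (\<alpha> * x + (1 - \<alpha>) * y)"

definition g_fun :: "(real \<Rightarrow> real \<Rightarrow> real) \<Rightarrow> real \<Rightarrow> real \<Rightarrow> real \<Rightarrow> real" where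
  "g_fun d m1 ma x = (1 + x) * I_alpha d (1 / (1 + x)) m1 ma"

text \<open>x_a = inverse of g_a (defined on [0, d(mu_1, mu_a))).\<close>
definition x_fun :: "(real \<Rightarrow> real \<Rightarrow> real) \<Rightarrow> real \<Rightarrow> real \<Rightarrow> real \<Rightarrow> real" where
  "x_fun d m1 ma y = (THE x. 0 \<le> x \<and> g_fun d m1 ma x = y)"

definition x_arm :: "(real \<Rightarrow> real \<Rightarrow> real) \<Rightarrow> (nat \<Rightarrow> real) \<Rightarrow> nat \<Rightarrow> real \<Rightarrow> real" where
  "x_arm d \<mu> a y = (if a = 1 then 1 else x_fun d (\<mu> 1) (\<mu> a) y)"

definition F_fun :: "(real \<Rightarrow> real \<Rightarrow> real) \<Rightarrow> nat \<Rightarrow> (nat \<Rightarrow> real) \<Rightarrow> (nat \<Rightarrow> real) \<Rightarrow> real \<Rightarrow> real" where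
  "F_fun d K \<mu> c y =
     (\<Sum>a=2..K. let xa = x_fun d (\<mu> 1) (\<mu> a) y; m = (\<mu> 1 + xa * \<mu> a) / (1 + xa)
                in (c a * d (\<mu> 1) m) / (c 1 * d (\<mu> a) m))"

definition opt_weights :: "(real \<Rightarrow> real \<Rightarrow> real) \<Rightarrow> nat \<Rightarrow> (nat \<Rightarrow> real) \<Rightarrow> (nat \<Rightarrow> real) \<Rightarrow> real \<Rightarrow> nat \<Rightarrow> real" where
  "opt_weights d K \<mu> c y a =
     c a * x_arm d \<mu> a y / (\<Sum>b=1..K. c b * x_arm d \<mu> b y)"

definition prob_simplex :: "nat \<Rightarrow> (nat \<Rightarrow> real) set" where
  "prob_simplex K = {w. (\<forall>a\<in>{1..K}. 0 \<le> w a) \<and> (\<Sum>a=1..K. w a) = 1}"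

definition alt_set :: "real set \<Rightarrow> nat \<Rightarrow> (nat \<Rightarrow> real) set" where
  "alt_set M K = {l. (\<forall>a\<in>{1..K}. l a \<in> M) \<and>
                     (\<exists>a\<in>{2..K}. \<forall>b\<in>{1..K}. b \<noteq> a \<longrightarrow> l b < l a)}"

definition objective :: "(real \<Rightarrow> real \<Rightarrow> real) \<Rightarrow> real set \<Rightarrow> nat \<Rightarrow> (nat \<Rightarrow> real) \<Rightarrow> (nat \<Rightarrow> real)
    \<Rightarrow> (nat \<Rightarrow> real) \<Rightarrow> real" where
  "objective d M K \<mu> c w = Inf ((\<lambda>l. \<Sum>a=1..K. w a / c a * d (\<mu> a) (l a)) ` alt_set M K)"

end

theory Submission
  imports Defs
begin

locale nefl =
  fixes Theta :: "real set" and b b' :: "real \<Rightarrow> real"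
  assumes nef: "nef_cumulant Theta b b'"
begin

abbreviation "psi \<equiv> natpar Theta b'"
abbreviation "dd \<equiv> nef_kl Theta b b'"
abbreviation "MM \<equiv> b' ` Theta"

lemma opn: "open Theta" and intv: "is_interval Theta"
  and derb: "\<theta> \<in> Theta \<Longrightarrow> (b has_real_derivative b' \<theta>) (at \<theta>)"
  and derb': "\<theta> \<in> Theta \<Longrightarrow> \<exists>v. (b' has_real_derivative v) (at \<theta>) \<and> v > 0"
  using nef unfolding nef_cumulant_def by auto

lemma intv_mem: "x \<in> Theta \<Longrightarrow> z \<in> Theta \<Longrightarrow> x \<le> y \<Longrightarrow> y \<le> z \<Longrightarrow> y \<in> Theta"
  using intv unfolding is_interval_1 by blast

lemma bp_cont: "\<theta> \<in> Theta \<Longrightarrow> isCont b' \<theta>"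
  using derb' DERIV_isCont by blast

lemma b_cont: "\<theta> \<in> Theta \<Longrightarrow> isCont b \<theta>"
  using derb DERIV_isCont by blast

lemma bp_strict:
  assumes "t1 \<in> Theta" "t2 \<in> Theta" "t1 < t2"
  shows "b' t1 < b' t2"
proof -
  define f' where "f' x = (SOME v. (b' has_real_derivative v) (at x) \<and> v > 0)" for x
  have f': "(b' has_real_derivative f' x) (at x) \<and> f' x > 0" if "x \<in> Theta" for x
    unfolding f'_def using someI_ex[OF derb'[OF that]] .
  have "\<exists>z. t1 < z \<and> z < t2 \<and> b' t2 - b' t1 = (t2 - t1) * f' z"
  proof (rule MVT2[OF assms(3), of b' f'])
    fix x assume "t1 \<le> x" "x \<le> t2"
    then have "x \<in> Theta" using intv_mem assms by blast
    then show "(b' has_real_derivative f' x) (at x)" using f' by blast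
  qed
  then obtain z where z: "t1 < z" "z < t2" "b' t2 - b' t1 = (t2 - t1) * f' z" by blast
  have "z \<in> Theta" using z assms intv_mem[of t1 t2 z] by auto
  then have "f' z > 0" using f' by blast
  then have "(t2 - t1) * f' z > 0" using assms(3) by simp
  with z show ?thesis by linarith
qed

lemma bp_mono_iff: "t1 \<in> Theta \<Longrightarrow> t2 \<in> Theta \<Longrightarrow> b' t1 < b' t2 \<longleftrightarrow> t1 < t2"
  using bp_strict by (metis linorder_neqE_linordered_idom order_less_asym')

lemma bp_inj: "t1 \<in> Theta \<Longrightarrow> t2 \<in> Theta \<Longrightarrow> b' t1 = b' t2 \<Longrightarrow> t1 = t2"
  using bp_strict by (metis linorder_neqE_linordered_idom order_less_irrefl)

lemma strict_conv:
  assumes "t \<in> Theta" "s \<in> Theta" "t \<noteq> s"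
  shows "b s - b t - (s - t) * b' t > 0"
proof (cases "t < s")
  case True
  have "\<exists>z. t < z \<and> z < s \<and> b s - b t = (s - t) * b' z"
    by (rule MVT2[OF True, of b b']) (use derb intv_mem assms in blast)
  then obtain z where z: "t < z" "z < s" "b s - b t = (s - t) * b' z" by blast
  have "z \<in> Theta" using z assms intv_mem[of t s z] by auto
  then have "b' t < b' z" using bp_strict assms z by blast
  then have "(s - t) * (b' z - b' t) > 0" using True by simp
  then show ?thesis using z by (simp add: algebra_simps)
next
  case False
  then have F: "s < t" using assms by auto
  have "\<exists>z. s < z \<and> z < t \<and> b t - b s = (t - s) * b' z"
    by (rule MVT2[OF F, of b b']) (use derb intv_mem assms in blast)
  then obtain z where z: "s < z" "z < t" "b t - b s = (t - s) * b' z" by blast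
  have "z \<in> Theta" using z assms intv_mem[of s t z] by auto
  then have "b' z < b' t" using bp_strict assms z by blast
  then have "(t - s) * (b' t - b' z) > 0" using F by simp
  then show ?thesis using z by (simp add: algebra_simps)
qed

lemma psi_bp: "t \<in> Theta \<Longrightarrow> psi (b' t) = t"
  unfolding natpar_def by (rule the_equality) (auto intro: bp_inj)

lemma psi: "m \<in> MM \<Longrightarrow> psi m \<in> Theta \<and> b' (psi m) = m"
  using psi_bp by auto

lemma psi_strict: "m \<in> MM \<Longrightarrow> m' \<in> MM \<Longrightarrow> m < m' \<Longrightarrow> psi m < psi m'"
  using psi bp_mono_iff by (metis not_less_iff_gr_or_eq order_less_asym)

lemma psi_mono: "m \<in> MM \<Longrightarrow> m' \<in> MM \<Longrightarrow> m \<le> m' \<Longrightarrow> psi m \<le> psi m'"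
  using psi_strict by (metis order_le_less)

lemma d_self[simp]: "dd x x = 0"
  unfolding nef_kl_def by simp

lemma d_pos: "x \<in> MM \<Longrightarrow> y \<in> MM \<Longrightarrow> x \<noteq> y \<Longrightarrow> dd x y > 0"
  unfolding nef_kl_def using strict_conv[of "psi x" "psi y"] psi by metis

lemma d_nonneg: "x \<in> MM \<Longrightarrow> y \<in> MM \<Longrightarrow> dd x y \<ge> 0"
  using d_pos[of x y] by (cases "x = y") auto

lemma d_zero_iff: "x \<in> MM \<Longrightarrow> y \<in> MM \<Longrightarrow> dd x y = 0 \<longleftrightarrow> x = y"
  using d_pos by fastforce

lemma bregman:
  assumes "p + q \<noteq> 0"
  shows "p * dd x1 m + q * dd x2 m
     = p * dd x1 ((p * x1 + q * x2) / (p + q)) + q * dd x2 ((p * x1 + q * x2) / (p + q))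
       + (p + q) * dd ((p * x1 + q * x2) / (p + q)) m"
proof -
  define mb where "mb = (p * x1 + q * x2) / (p + q)"
  have h: "p * x1 + q * x2 = (p + q) * mb" using assms unfolding mb_def by simp
  have "p * dd x1 m + q * dd x2 m - (p * dd x1 mb + q * dd x2 mb + (p + q) * dd mb m)
     = (psi mb - psi m) * (p * x1 + q * x2 - (p + q) * mb)"
    unfolding nef_kl_def by (simp add: algebra_simps)
  also have "\<dots> = 0" using h by simp
  finally show ?thesis unfolding mb_def[symmetric] by simp
qed

lemma threepoint: "dd x z = dd x y + dd y z + (psi y - psi z) * (x - y)"
  unfolding nef_kl_def by (simp add: algebra_simps)

lemma M_interval: "x \<in> MM \<Longrightarrow> z \<in> MM \<Longrightarrow> x \<le> m \<Longrightarrow> m \<le> z \<Longrightarrow> m \<in> MM"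
proof -
  assume x: "x \<in> MM" and z: "z \<in> MM" and xm: "x \<le> m" and mz: "m \<le> z"
  obtain tx tz where tx: "tx \<in> Theta" "x = b' tx" and tz: "tz \<in> Theta" "z = b' tz" using x z by auto
  have le: "tx \<le> tz" using bp_strict[OF tz(1) tx(1)] tx tz xm mz by force
  have "continuous_on {tx..tz} b'"
    using bp_cont intv_mem tx tz by (meson atLeastAtMost_iff continuous_at_imp_continuous_on)
  then obtain t where "tx \<le> t" "t \<le> tz" "b' t = m"
    using IVT'[of b' tx m tz] xm mz tx tz le by auto
  then show "m \<in> MM" using intv_mem[OF tx(1) tz(1)] by force
qed

lemma M_open: "open MM"
  unfolding open_dist
proof
  fix v assume v: "v \<in> MM"
  then obtain t where t: "t \<in> Theta" "v = b' t" by auto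
  obtain e where e: "e > 0" "ball t e \<subseteq> Theta" using opn t openE by blast
  have t1: "t - e/2 \<in> Theta" and t2: "t + e/2 \<in> Theta" using e by (auto simp: dist_real_def)
  have l: "b' (t - e/2) < v" and r: "v < b' (t + e/2)"
    using bp_strict t t1 t2 e by auto
  define r where "r = min (v - b' (t - e/2)) (b' (t + e/2) - v)"
  have "r > 0" using l r unfolding r_def by auto
  moreover have "y \<in> MM" if "dist y v < r" for y
    using M_interval[of "b' (t - e/2)" "b' (t + e/2)" y] that t1 t2 unfolding r_def dist_real_def by auto
  ultimately show "\<exists>e>0. \<forall>y. dist y v < e \<longrightarrow> y \<in> MM" by blast
qed

lemma psi_cont: assumes "m \<in> MM" shows "isCont psi m"
proof -
  have t: "psi m \<in> Theta" "b' (psi m) = m" using psi assms by auto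
  obtain e where e: "e > 0" "cball (psi m) e \<subseteq> Theta" using opn t open_contains_cball by blast
  have "isCont psi (b' (psi m))"
  proof (rule isCont_inverse_function[where f=b' and g=psi and x="psi m", OF e(1)])
    fix z assume "\<bar>z - psi m\<bar> \<le> e"
    then have "z \<in> cball (psi m) e" by (simp add: dist_real_def abs_minus_commute)
    then have "z \<in> Theta" using e(2) by blast
    then show "psi (b' z) = z" using psi_bp by auto
  next
    fix z assume "\<bar>z - psi m\<bar> \<le> e"
    then have "z \<in> cball (psi m) e" by (simp add: dist_real_def abs_minus_commute)
    then have "z \<in> Theta" using e(2) by blast
    then show "isCont b' z" using bp_cont by auto
  qed
  then show ?thesis using t by simp
qed

lemma d_cont: assumes "m \<in> MM" shows "isCont (\<lambda>y. dd x y) m"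
proof -
  have "isCont (\<lambda>y. b (psi y)) m"
    using psi_cont[OF assms] b_cont psi[OF assms] isCont_o2 by blast
  then show ?thesis unfolding nef_kl_def using psi_cont[OF assms]
    by (intro continuous_intros) auto
qed

lemma d_conton: "continuous_on MM (\<lambda>y. dd x y)"
  using d_cont continuous_at_imp_continuous_on by blast

end


context nefl
begin

lemma cont_eps:
  assumes "m \<in> MM" "e > 0"
  shows "\<exists>s>0. \<forall>z. \<bar>z - m\<bar> < s \<longrightarrow> \<bar>dd x z - dd x m\<bar> < e"
proof -
  have "(\<lambda>y. dd x y) \<midarrow>m\<rightarrow> dd x m" using d_cont[OF assms(1)] isCont_def by blast
  then obtain s where "s > 0" "\<forall>z. z \<noteq> m \<and> \<bar>z - m\<bar> < s \<longrightarrow> \<bar>dd x z - dd x m\<bar> < e"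
    using assms(2) unfolding LIM_eq by auto
  then show ?thesis by (metis abs_zero assms(2) cancel_comm_monoid_add_class.diff_cancel)
qed

definition mx :: "real \<Rightarrow> real \<Rightarrow> real \<Rightarrow> real" where
  "mx m1 ma x = (m1 + x * ma) / (1 + x)"

lemma mx_alt: "x \<ge> 0 \<Longrightarrow> mx m1 ma x = ma + (m1 - ma) / (1 + x)"
  unfolding mx_def by (simp add: field_simps)

lemma mx_0[simp]: "mx m1 ma 0 = m1"
  unfolding mx_def by simp

context
  fixes m1 ma assumes m1: "m1 \<in> MM" and ma: "ma \<in> MM" and lt: "ma < m1"
begin

lemma mx_bounds: assumes "x \<ge> 0" shows "ma < mx m1 ma x" "mx m1 ma x \<le> m1"
proof -
  have "(m1 - ma) / (1 + x) > 0" using lt assms by simp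
  then show "ma < mx m1 ma x" using mx_alt[OF assms] by simp
  have "(m1 - ma) / (1 + x) \<le> (m1 - ma)" using lt assms by (simp add: divide_le_eq)
  then show "mx m1 ma x \<le> m1" using mx_alt[OF assms] by simp
qed

lemma mx_M: "x \<ge> 0 \<Longrightarrow> mx m1 ma x \<in> MM"
  using M_interval[OF ma m1] mx_bounds by (meson less_imp_le)

lemma mx_strict: "0 \<le> x \<Longrightarrow> x < x' \<Longrightarrow> mx m1 ma x' < mx m1 ma x"
  using lt by (simp add: mx_alt divide_strict_left_mono)

lemma mx_close: "s > 0 \<Longrightarrow> \<exists>X\<ge>0. \<bar>mx m1 ma X - ma\<bar> < s"
proof -
  assume s: "s > 0"
  define X where "X = (m1 - ma) / s"
  have X: "X \<ge> 0" using lt s unfolding X_def by simp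
  have "(m1 - ma) / (1 + X) < s"
    using s lt unfolding X_def by (simp add: field_simps)
  moreover have "(m1 - ma) / (1 + X) > 0" using lt X by simp
  ultimately show ?thesis using X mx_alt[OF X] by (intro exI[of _ X]) auto
qed

abbreviation "gg \<equiv> g_fun dd m1 ma"

lemma g_eq: assumes "x \<ge> 0"
  shows "gg x = dd m1 (mx m1 ma x) + x * dd ma (mx m1 ma x)"
proof -
  have nz: "1 + x \<noteq> 0" using assms by simp
  have e1: "1 - 1 / (1 + x) = x / (1 + x)" using nz by (simp add: field_simps)
  have e: "1 / (1 + x) * m1 + (1 - 1 / (1 + x)) * ma = mx m1 ma x"
    unfolding mx_def e1 by (simp add: add_divide_distrib)
  have e2: "(1 + x) * (1 / (1 + x)) = 1" "(1 + x) * (1 - 1 / (1 + x)) = x"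
    using assms by (simp_all add: field_simps)
  show ?thesis unfolding g_fun_def I_alpha_def e
    using nz by (simp add: distrib_left mult.assoc[symmetric] e2)
qed

lemma g_bregman: assumes "x \<ge> 0"
  shows "dd m1 m + x * dd ma m = gg x + (1 + x) * dd (mx m1 ma x) m"
  using bregman[of 1 x m1 m ma] assms unfolding g_eq[OF assms] mx_def by simp

lemma g_le: "x \<ge> 0 \<Longrightarrow> m \<in> MM \<Longrightarrow> gg x \<le> dd m1 m + x * dd ma m"
  using g_bregman d_nonneg mx_M by (smt (verit) mult_nonneg_nonneg)

lemma g_less: "x \<ge> 0 \<Longrightarrow> m \<in> MM \<Longrightarrow> m \<noteq> mx m1 ma x \<Longrightarrow> gg x < dd m1 m + x * dd ma m"
  using g_bregman d_pos mx_M by (smt (verit) mult_pos_pos)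

lemma g0: "gg 0 = 0"
  using g_eq[of 0] by simp

lemma g_strict: assumes "0 \<le> x" "x < x'" shows "gg x < gg x'"
proof -
  have "mx m1 ma x' \<noteq> mx m1 ma x" using mx_strict assms by fastforce
  then have "gg x < dd m1 (mx m1 ma x') + x * dd ma (mx m1 ma x')"
    using g_less assms mx_M by auto
  also have "\<dots> \<le> dd m1 (mx m1 ma x') + x' * dd ma (mx m1 ma x')"
    using assms d_nonneg[OF ma mx_M] by (simp add: mult_right_mono)
  finally show ?thesis using g_eq assms by simp
qed

lemma g_mono_iff: "0 \<le> x \<Longrightarrow> 0 \<le> x' \<Longrightarrow> gg x < gg x' \<longleftrightarrow> x < x'"
  using g_strict by (metis linorder_neqE_linordered_idom order_less_asym)

lemma g_inj: "0 \<le> x \<Longrightarrow> 0 \<le> x' \<Longrightarrow> gg x = gg x' \<Longrightarrow> x = x'"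
  using g_strict by (metis linorder_neqE_linordered_idom order_less_irrefl)

lemma g_nonneg: "x \<ge> 0 \<Longrightarrow> gg x \<ge> 0"
  using g0 g_strict by (metis order_le_less)

lemma g_lt: assumes "x \<ge> 0" shows "gg x < dd m1 ma"
proof -
  have "ma \<noteq> mx m1 ma x" using mx_bounds[OF assms] by simp
  then show ?thesis using g_less[OF assms ma] by simp
qed

lemma mx_cont: "continuous_on {0..} (mx m1 ma)"
  unfolding mx_def by (intro continuous_intros) auto

lemma d_mx_cont: "continuous_on {0..} (\<lambda>x. dd z (mx m1 ma x))"
  by (rule continuous_on_compose2[OF d_conton mx_cont]) (use mx_M in auto)

lemma g_cont: "continuous_on {0..} gg"
proof -
  have "continuous_on {0..} (\<lambda>x. dd m1 (mx m1 ma x) + x * dd ma (mx m1 ma x))"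
    using d_mx_cont by (intro continuous_intros) auto
  then show ?thesis using continuous_on_cong g_eq by (smt (verit) atLeast_iff)
qed

lemma g_large: assumes "y < dd m1 ma" shows "\<exists>X\<ge>0. gg X > y"
proof -
  obtain s where s: "s > 0" "\<forall>z. \<bar>z - ma\<bar> < s \<longrightarrow> \<bar>dd m1 z - dd m1 ma\<bar> < dd m1 ma - y"
    using cont_eps[OF ma, of "dd m1 ma - y" m1] assms by auto
  obtain X where X: "X \<ge> 0" "\<bar>mx m1 ma X - ma\<bar> < s" using mx_close s by blast
  have "dd m1 (mx m1 ma X) > y" using s X by fastforce
  moreover have "gg X \<ge> dd m1 (mx m1 ma X)"
    using g_eq[OF X(1)] d_nonneg[OF ma mx_M[OF X(1)]] X(1) by simp
  ultimately show ?thesis using X by force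
qed

lemma g_image: assumes "X \<ge> 0" shows "gg ` {0..X} = {0..gg X}"
proof
  show "gg ` {0..X} \<subseteq> {0..gg X}"
  proof
    fix y assume "y \<in> gg ` {0..X}"
    then obtain x where x: "0 \<le> x" "x \<le> X" "y = gg x" by auto
    have "gg x \<le> gg X" using g_strict[of x X] x by (cases "x = X") auto
    then show "y \<in> {0..gg X}" using g_nonneg x by auto
  qed
  show "{0..gg X} \<subseteq> gg ` {0..X}"
  proof
    fix y assume y: "y \<in> {0..gg X}"
    have "continuous_on {0..X} gg" using g_cont by (rule continuous_on_subset) auto
    then obtain x where "0 \<le> x" "x \<le> X" "gg x = y"
      using IVT'[of gg 0 y X] y g0 assms by auto
    then show "y \<in> gg ` {0..X}" by auto
  qed
qed

lemma g_surj: assumes "0 \<le> y" "y < dd m1 ma" shows "\<exists>x\<ge>0. gg x = y"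
proof -
  obtain X where X: "X \<ge> 0" "gg X > y" using g_large assms by blast
  then have "y \<in> gg ` {0..X}" using g_image assms by auto
  then show ?thesis by auto
qed

lemma x_fun_prop: assumes "0 \<le> y" "y < dd m1 ma"
  shows "x_fun dd m1 ma y \<ge> 0 \<and> gg (x_fun dd m1 ma y) = y"
proof -
  have "\<exists>!x. 0 \<le> x \<and> gg x = y" using g_surj[OF assms] g_inj by blast
  then show ?thesis unfolding x_fun_def by (rule theI')
qed

lemma x_fun_g: "x \<ge> 0 \<Longrightarrow> x_fun dd m1 ma (gg x) = x"
  unfolding x_fun_def by (rule the_equality) (auto intro: g_inj)

lemma x_fun_0: "x_fun dd m1 ma 0 = 0"
  using x_fun_g[of 0] g0 by simp

lemma x_fun_cont: assumes "X \<ge> 0" shows "continuous_on {0..gg X} (x_fun dd m1 ma)"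
proof -
  have "continuous_on (gg ` {0..X}) (x_fun dd m1 ma)"
    by (rule continuous_on_inv) (use g_cont x_fun_g in \<open>auto intro: continuous_on_subset\<close>)
  then show ?thesis using g_image[OF assms] by simp
qed

lemma ratio_exists: assumes "C > 0"
  shows "\<exists>X\<ge>0. dd ma (mx m1 ma X) \<le> C * dd m1 (mx m1 ma X)"
proof -
  have D: "dd m1 ma > 0" using d_pos m1 ma lt by auto
  obtain s1 where s1: "s1 > 0" "\<forall>z. \<bar>z - ma\<bar> < s1 \<longrightarrow> \<bar>dd m1 z - dd m1 ma\<bar> < dd m1 ma / 2"
    using cont_eps[OF ma, of "dd m1 ma / 2" m1] D by auto
  obtain s2 where s2: "s2 > 0" "\<forall>z. \<bar>z - ma\<bar> < s2 \<longrightarrow> \<bar>dd ma z - dd ma ma\<bar> < C * dd m1 ma / 2"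
    using cont_eps[OF ma, of "C * dd m1 ma / 2" ma] D assms by auto
  obtain X where X: "X \<ge> 0" "\<bar>mx m1 ma X - ma\<bar> < min s1 s2" using mx_close s1 s2
    by (metis min_less_iff_conj)
  define z where "z = mx m1 ma X"
  have "\<bar>z - ma\<bar> < s1" "\<bar>z - ma\<bar> < s2" using X unfolding z_def by auto
  then have "\<bar>dd m1 z - dd m1 ma\<bar> < dd m1 ma / 2" "\<bar>dd ma z - dd ma ma\<bar> < C * dd m1 ma / 2"
    using s1(2) s2(2) by blast+
  then have a: "dd m1 z > dd m1 ma / 2" and b: "dd ma z < C * dd m1 ma / 2"
    unfolding abs_less_iff by auto
  have "C * (dd m1 ma / 2) \<le> C * dd m1 z" using a assms by simp
  then show ?thesis using X b unfolding z_def by (intro exI[of _ X]) auto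
qed

end

end


lemma sum_split1: "(1::nat) \<le> K \<Longrightarrow> sum f {1..K} = f 1 + sum f {2..K}"
  by (simp add: sum.atLeast_Suc_atMost numeral_2_eq_2)

lemma nn3: "0 \<le> (w::real) \<Longrightarrow> 0 < c \<Longrightarrow> 0 \<le> d \<Longrightarrow> 0 \<le> w / c * d"
  by simp

context nefl
begin

context
  fixes K :: nat and mu c :: "nat \<Rightarrow> real"
  assumes K2: "K \<ge> 2"
    and means: "\<forall>a\<in>{1..K}. mu a \<in> MM"
    and best: "\<forall>a\<in>{2..K}. mu 1 > mu a"
    and cpos: "\<forall>a\<in>{1..K}. c a > 0"
begin

abbreviation "cost w l \<equiv> (\<Sum>a=1..K. w a / c a * dd (mu a) (l a))"

lemma mu1: "mu 1 \<in> MM" using means K2 by auto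

lemma cost_nonneg:
  assumes "\<forall>a\<in>{1..K}. w a \<ge> 0" "\<forall>a\<in>{1..K}. l a \<in> MM"
  shows "cost w l \<ge> 0"
proof (intro sum_nonneg)
  fix x assume x: "x \<in> {1..K}"
  show "0 \<le> w x / c x * dd (mu x) (l x)"
    by (rule nn3) (use assms means cpos d_nonneg x in auto)
qed

lemma bdd: assumes "\<forall>a\<in>{1..K}. w a \<ge> 0"
  shows "bdd_below ((\<lambda>l. cost w l) ` alt_set MM K)"
  unfolding bdd_below_def alt_set_def using cost_nonneg[OF assms] by blast

lemma UB_approx:
  assumes w: "\<forall>b\<in>{1..K}. w b \<ge> 0" and a: "a \<in> {2..K}" and m: "m \<in> MM" and e: "e > 0"
  shows "\<exists>l\<in>alt_set MM K. cost w l < w 1 / c 1 * dd (mu 1) m + w a / c a * dd (mu a) m + e"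
proof -
  define v where "v = (\<lambda>b. if b = 1 \<or> b = a then m else mu b)"
  have vM: "\<forall>b\<in>{1..K}. v b \<in> MM" using means m unfolding v_def by auto
  have a1: "a \<noteq> 1" "1 \<in> {1..K}" "a \<in> {1..K}" using a by auto
  have "cost w v = (\<Sum>b\<in>{1,a}. w b / c b * dd (mu b) (v b))"
    by (rule sum.mono_neutral_left[symmetric]) (use a1 in \<open>auto simp: v_def\<close>)
  also have "\<dots> = w 1 / c 1 * dd (mu 1) m + w a / c a * dd (mu a) m"
    using a1 by (simp add: v_def)
  finally have cv: "cost w v = w 1 / c 1 * dd (mu 1) m + w a / c a * dd (mu a) m" .
  define T where "T = Max (v ` {2..K})"
  have "T \<in> v ` {2..K}" unfolding T_def using a by (intro Max_in) auto
  then obtain b0 where b0: "b0 \<in> {2..K}" "v b0 = T" by auto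
  have vle: "v b \<le> v b0" if "b \<in> {2..K}" for b
  proof -
    have "v b \<le> Max (v ` {2..K})" by (rule Max_ge) (use that in auto)
    then show ?thesis using b0 unfolding T_def by simp
  qed
  have b0K: "b0 \<in> {1..K}" "b0 \<noteq> 1" using b0 by auto
  have v1: "v 1 \<le> v b0" using vle[OF a] by (simp add: v_def)
  define p where "p = w b0 / c b0"
  have "w b0 \<ge> 0" "c b0 > 0" using w cpos b0K by auto
  then have p: "p \<ge> 0" unfolding p_def by auto
  have vb0: "v b0 \<in> MM" using vM b0K by auto
  obtain s where s: "s > 0" "\<forall>z. \<bar>z - v b0\<bar> < s \<longrightarrow> \<bar>dd (mu b0) z - dd (mu b0) (v b0)\<bar> < e / (p + 1)"
    using cont_eps[OF vb0, of "e / (p + 1)" "mu b0"] e p by auto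
  obtain r where r: "r > 0" "ball (v b0) r \<subseteq> MM" using M_open vb0 openE by blast
  define \<delta> where "\<delta> = min s r / 2"
  have \<delta>: "\<delta> > 0" "\<delta> < s" "\<delta> < r" using s r unfolding \<delta>_def by auto
  define l where "l = v(b0 := v b0 + \<delta>)"
  have lb0M: "v b0 + \<delta> \<in> MM" using r \<delta> by (auto simp: dist_real_def)
  have lalt: "l \<in> alt_set MM K"
    unfolding alt_set_def
  proof (intro CollectI conjI)
    show "\<forall>a\<in>{1..K}. l a \<in> MM" using vM lb0M unfolding l_def by auto
    have "\<forall>b\<in>{1..K}. b \<noteq> b0 \<longrightarrow> l b < l b0"
    proof (intro ballI impI)
      fix b assume "b \<in> {1..K}" "b \<noteq> b0"
      then have "v b \<le> v b0" using vle v1 by (cases "b = 1") auto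
      then show "l b < l b0" unfolding l_def using \<open>b \<noteq> b0\<close> \<delta> by auto
    qed
    then show "\<exists>a\<in>{2..K}. \<forall>b\<in>{1..K}. b \<noteq> a \<longrightarrow> l b < l a" using b0 by blast
  qed
  have cl1: "cost w l = w b0 / c b0 * dd (mu b0) (l b0) + (\<Sum>b\<in>{1..K} - {b0}. w b / c b * dd (mu b) (l b))"
    by (rule sum.remove) (use b0K in auto)
  have cl2: "w b0 / c b0 * dd (mu b0) (l b0) = p * dd (mu b0) (v b0 + \<delta>)"
    unfolding l_def p_def by simp
  have cl3: "(\<Sum>b\<in>{1..K} - {b0}. w b / c b * dd (mu b) (l b)) = (\<Sum>b\<in>{1..K} - {b0}. w b / c b * dd (mu b) (v b))"
    unfolding l_def by (rule sum.cong) auto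
  have cl: "cost w l = p * dd (mu b0) (v b0 + \<delta>) + (\<Sum>b\<in>{1..K} - {b0}. w b / c b * dd (mu b) (v b))"
    using cl1 cl2 cl3 by linarith
  have cv2: "cost w v = p * dd (mu b0) (v b0) + (\<Sum>b\<in>{1..K} - {b0}. w b / c b * dd (mu b) (v b))"
    unfolding p_def by (rule sum.remove) (use b0K in auto)
  define D where "D = dd (mu b0) (v b0 + \<delta>) - dd (mu b0) (v b0)"
  have "\<bar>D\<bar> < e / (p + 1)" using s \<delta> unfolding D_def by auto
  then have "p * \<bar>D\<bar> \<le> p * (e / (p + 1))"
    using p by (intro mult_left_mono) auto
  moreover have "p * (e / (p + 1)) < e" using p e by (simp add: field_simps)
  moreover have "p * D \<le> p * \<bar>D\<bar>" using p by (intro mult_left_mono) auto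
  ultimately have "p * D < e" by linarith
  then have "p * (dd (mu b0) (v b0 + \<delta>) - dd (mu b0) (v b0)) < e" unfolding D_def .
  then have "cost w l < cost w v + e" using cl cv2 by (simp add: algebra_simps)
  then show ?thesis using lalt cv by auto
qed

lemma alt_nonempty: "alt_set MM K \<noteq> {}"
  using UB_approx[of "\<lambda>_. 0" 2 "mu 1" 1] K2 mu1 by auto

lemma UB:
  assumes w: "\<forall>b\<in>{1..K}. w b \<ge> 0" and a: "a \<in> {2..K}" and m: "m \<in> MM"
  shows "objective dd MM K mu c w \<le> w 1 / c 1 * dd (mu 1) m + w a / c a * dd (mu a) m"
proof (rule ccontr)
  let ?R = "w 1 / c 1 * dd (mu 1) m + w a / c a * dd (mu a) m"
  assume "\<not> ?thesis"
  then have e: "objective dd MM K mu c w - ?R > 0" by simp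
  obtain l where l: "l \<in> alt_set MM K" "cost w l < ?R + (objective dd MM K mu c w - ?R)"
    using UB_approx[OF w a m e] by blast
  have "objective dd MM K mu c w \<le> cost w l"
    unfolding objective_def using l(1) bdd[OF w] by (intro cInf_lower) auto
  then show False using l(2) by simp
qed

lemma mono_step:
  assumes "x \<in> MM" "y \<in> MM" "z \<in> MM" "x \<le> y \<and> y \<le> z \<or> z \<le> y \<and> y \<le> x"
  shows "dd x y \<le> dd x z"
proof -
  have "(psi y - psi z) * (x - y) \<ge> 0"
    using assms psi_mono[of y z] psi_mono[of z y]
    by (auto intro: mult_nonpos_nonpos mult_nonneg_nonneg)
  then show ?thesis using threepoint[of x z y] d_nonneg[of y z] assms by linarith
qed

lemma two_to_one:
  assumes u: "u \<in> MM" and v: "v \<in> MM" and uv: "u < v" and a: "a \<in> {2..K}"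
  shows "\<exists>m\<in>MM. dd (mu 1) m \<le> dd (mu 1) u \<and> dd (mu a) m \<le> dd (mu a) v"
proof -
  have ma: "mu a \<in> MM" and lt: "mu a < mu 1" using means best a by auto
  show ?thesis
  proof (cases "u \<ge> mu a")
    case True
    then show ?thesis using mono_step[OF ma u v] u uv by (intro bexI[of _ u]) auto
  next
    case False
    show ?thesis
    proof (cases "v \<ge> mu a")
      case True
      then show ?thesis using mono_step[OF mu1 ma u] False lt d_nonneg[OF ma v] ma
        by (intro bexI[of _ "mu a"]) auto
    next
      case F2: False
      then show ?thesis using mono_step[OF mu1 v u] uv lt v by (intro bexI[of _ v]) auto
    qed
  qed
qed

lemma LB:
  assumes w: "\<forall>b\<in>{1..K}. w b \<ge> 0" and l: "l \<in> alt_set MM K"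
  shows "\<exists>a\<in>{2..K}. \<exists>m\<in>MM. w 1 / c 1 * dd (mu 1) m + w a / c a * dd (mu a) m \<le> cost w l"
proof -
  obtain a where a: "a \<in> {2..K}" "\<forall>b\<in>{1..K}. b \<noteq> a \<longrightarrow> l b < l a"
    and lM: "\<forall>b\<in>{1..K}. l b \<in> MM" using l unfolding alt_set_def by auto
  have a1: "a \<noteq> 1" "1 \<in> {1..K}" "a \<in> {1..K}" using a K2 by auto
  have lt: "l 1 < l a" using a a1 by auto
  obtain m where m: "m \<in> MM" "dd (mu 1) m \<le> dd (mu 1) (l 1)" "dd (mu a) m \<le> dd (mu a) (l a)"
    using two_to_one[OF _ _ lt a(1)] lM a1 by blast
  have "w 1 \<ge> 0" "c 1 > 0" "w a \<ge> 0" "c a > 0" using w cpos a1 by auto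
  then have p: "w 1 / c 1 \<ge> 0" "w a / c a \<ge> 0" by auto
  have "w 1 / c 1 * dd (mu 1) m + w a / c a * dd (mu a) m
      \<le> w 1 / c 1 * dd (mu 1) (l 1) + w a / c a * dd (mu a) (l a)"
    using m p by (intro add_mono mult_left_mono) auto
  also have "\<dots> = (\<Sum>b\<in>{1,a}. w b / c b * dd (mu b) (l b))" using a1 by simp
  also have "\<dots> \<le> cost w l"
  proof (rule sum_mono2)
    fix b assume "b \<in> {1..K} - {1, a}"
    then have b: "b \<in> {1..K}" by auto
    show "0 \<le> w b / c b * dd (mu b) (l b)"
      by (rule nn3) (use b w cpos lM means d_nonneg in auto)
  qed (use a1 in auto)
  finally show ?thesis using a m by blast
qed

end

end


context nefl
begin

context
  fixes K :: nat and mu c :: "nat \<Rightarrow> real"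
  assumes K2: "K \<ge> 2"
    and means: "\<forall>a\<in>{1..K}. mu a \<in> MM"
    and best: "\<forall>a\<in>{2..K}. mu 1 > mu a"
    and cpos: "\<forall>a\<in>{1..K}. c a > 0"
begin

lemma muM: "a \<in> {2..K} \<Longrightarrow> mu a \<in> MM" and mult: "a \<in> {2..K} \<Longrightarrow> mu a < mu 1"
  using means best by auto

lemmas mu1' = mu1[OF K2 means best cpos]
lemmas UB' = UB[OF K2 means best cpos]
lemmas LB' = LB[OF K2 means best cpos]
lemmas alt_nonempty' = alt_nonempty[OF K2 means best cpos]

lemma F_eq:
  "F_fun dd K mu c y = (\<Sum>a=2..K. c a * dd (mu 1) (mx (mu 1) (mu a) (x_fun dd (mu 1) (mu a) y))
      / (c 1 * dd (mu a) (mx (mu 1) (mu a) (x_fun dd (mu 1) (mu a) y))))"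
  unfolding F_fun_def Let_def mx_def ..

lemma F0: "F_fun dd K mu c 0 = 0"
  unfolding F_eq using x_fun_0[OF mu1' muM mult] by simp

lemma opt:
  assumes y0: "0 \<le> y" and ylt: "\<forall>a\<in>{2..K}. y < dd (mu 1) (mu a)" and F1: "F_fun dd K mu c y = 1"
  defines "ws \<equiv> opt_weights dd K mu c y"
  shows "ws \<in> prob_simplex K"
    and "\<forall>w\<in>prob_simplex K. objective dd MM K mu c w \<le> objective dd MM K mu c ws"
    and "\<forall>w\<in>prob_simplex K. objective dd MM K mu c w = objective dd MM K mu c ws
            \<longrightarrow> (\<forall>a\<in>{1..K}. w a = ws a)"
proof -
  define X where "X a = x_arm dd mu a y" for a
  have X1: "X 1 = 1" unfolding X_def x_arm_def by simp
  have Xa: "X a = x_fun dd (mu 1) (mu a) y" if "a \<in> {2..K}" for a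
    using that unfolding X_def x_arm_def by auto
  have Xprop: "X a \<ge> 0 \<and> g_fun dd (mu 1) (mu a) (X a) = y" if a: "a \<in> {2..K}" for a
    using x_fun_prop[OF mu1' muM[OF a] mult[OF a] y0] ylt a Xa[OF a] by auto
  have cp: "c a > 0" if "a \<in> {1..K}" for a using cpos that by auto
  define S where "S = (\<Sum>b=1..K. c b * X b)"
  have S_split: "S = c 1 + (\<Sum>b=2..K. c b * X b)"
    unfolding S_def using sum_split1[of K "\<lambda>b. c b * X b"] K2 X1 by simp
  have "(\<Sum>b=2..K. c b * X b) \<ge> 0"
  proof (intro sum_nonneg)
    fix x assume x: "x \<in> {2..K}"
    have "X x \<ge> 0" "c x > 0" using Xprop[OF x] cp x by auto
    then show "0 \<le> c x * X x" by simp
  qed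
  then have Spos: "S > 0" using S_split cp[of 1] K2 by simp
  have ws: "ws a = c a * X a / S" for a
    unfolding ws_def opt_weights_def X_def S_def ..
  have Xnn: "X a \<ge> 0" if "a \<in> {1..K}" for a
    using that Xprop X1 by (cases "a = 1") auto
  show simp: "ws \<in> prob_simplex K"
    unfolding prob_simplex_def
  proof (intro CollectI conjI ballI)
    fix a assume "a \<in> {1..K}"
    then have "c a > 0" "X a \<ge> 0" using cp Xnn by auto
    then show "0 \<le> ws a" unfolding ws using Spos by simp
  next
    show "(\<Sum>a=1..K. ws a) = 1" unfolding ws using Spos
      by (simp add: sum_divide_distrib[symmetric] S_def)
  qed
  define mm where "mm a = mx (mu 1) (mu a) (X a)" for a
  define A where "A a = dd (mu 1) (mm a)" for a
  define B where "B a = dd (mu a) (mm a)" for a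
  have mmM: "mm a \<in> MM" and mmgt: "mu a < mm a" if a: "a \<in> {2..K}" for a
    using mx_M[OF mu1' muM[OF a] mult[OF a]] mx_bounds[OF mu1' muM[OF a] mult[OF a]] Xprop[OF a]
    unfolding mm_def by auto
  have Bpos: "B a > 0" if a: "a \<in> {2..K}" for a
    unfolding B_def using d_pos[OF muM[OF a] mmM[OF a]] mmgt[OF a] by simp
  have Anonneg: "A a \<ge> 0" if a: "a \<in> {2..K}" for a
    unfolding A_def using d_nonneg[OF mu1' mmM[OF a]] .
  have gy: "y = A a + X a * B a" if a: "a \<in> {2..K}" for a
    using g_eq[OF mu1' muM[OF a] mult[OF a]] Xprop[OF a] unfolding A_def B_def mm_def by metis
  have "F_fun dd K mu c y = (\<Sum>a=2..K. c a * A a / (c 1 * B a))"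
    unfolding F_eq A_def B_def mm_def by (rule sum.cong) (auto simp: Xa)
  also have "\<dots> = (\<Sum>a=2..K. c a * A a / B a) / c 1"
    by (simp add: sum_divide_distrib mult.commute)
  finally have sumA: "(\<Sum>a=2..K. c a * A a / B a) = c 1" using F1 cp[of 1] K2 by simp
  define Z where "Z = (\<Sum>a=2..K. c a / B a)"
  have Zpos: "Z > 0" unfolding Z_def
    using K2 cp Bpos by (intro sum_pos) auto
  define L where "L w a = w 1 / c 1 * A a + w a / c a * B a" for w :: "nat \<Rightarrow> real" and a
  have ident: "(\<Sum>a=2..K. c a / B a * L w a) = 1" if w: "w \<in> prob_simplex K" for w
  proof -
    have "(\<Sum>a=2..K. c a / B a * L w a) = (\<Sum>a=2..K. w 1 / c 1 * (c a * A a / B a) + w a)"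
    proof (rule sum.cong)
      fix a assume a: "a \<in> {2..K}"
      have "c a \<noteq> 0" "B a \<noteq> 0" using cp Bpos a by fastforce+
      then show "c a / B a * L w a = w 1 / c 1 * (c a * A a / B a) + w a"
        unfolding L_def by (simp add: field_simps)
    qed simp
    also have "\<dots> = w 1 / c 1 * (\<Sum>a=2..K. c a * A a / B a) + (\<Sum>a=2..K. w a)"
      by (simp add: sum.distrib sum_distrib_left)
    also have "\<dots> = w 1 + (\<Sum>a=2..K. w a)" using sumA cp[of 1] K2 by simp
    also have "\<dots> = (\<Sum>a=1..K. w a)" using sum_split1[of K w] K2 by simp
    also have "\<dots> = 1" using w unfolding prob_simplex_def by simp
    finally show ?thesis .
  qed
  have Lws: "L ws a = y / S" if a: "a \<in> {2..K}" for a
  proof -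
    have "ws 1 / c 1 = 1 / S" "ws a / c a = X a / S"
      unfolding ws using cp[of 1] cp[of a] a K2 X1 by auto
    then show ?thesis unfolding L_def using gy[OF a] by (simp add: add_divide_distrib)
  qed
  have "(\<Sum>a=2..K. c a / B a * L ws a) = Z * (y / S)"
    unfolding Z_def sum_distrib_right by (rule sum.cong) (auto simp: Lws)
  then have Zy: "Z * (y / S) = 1" using ident[OF simp] by linarith
  have wnn: "\<forall>b\<in>{1..K}. w b \<ge> 0" if "w \<in> prob_simplex K" for w
    using that unfolding prob_simplex_def by auto
  have objL: "objective dd MM K mu c w \<le> L w a" if w: "w \<in> prob_simplex K" and a: "a \<in> {2..K}" for w a
    unfolding L_def A_def B_def using UB'[OF wnn[OF w] a mmM[OF a]] .
  have obj_ub: "objective dd MM K mu c w \<le> y / S" if w: "w \<in> prob_simplex K" for w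
  proof (rule ccontr)
    assume "\<not> ?thesis"
    then have gt: "L w a > y / S" if "a \<in> {2..K}" for a using objL[OF w that] by simp
    have "(\<Sum>a=2..K. c a / B a * (y / S)) < (\<Sum>a=2..K. c a / B a * L w a)"
    proof (rule sum_strict_mono)
      fix a assume a: "a \<in> {2..K}"
      have "c a / B a > 0" using cp Bpos a by simp
      then show "c a / B a * (y / S) < c a / B a * L w a" using gt[OF a] by (rule mult_strict_left_mono[rotated])
    qed (use K2 in auto)
    also have "\<dots> = 1" using ident[OF w] .
    finally show False using Zy unfolding Z_def sum_distrib_right by simp
  qed
  have obj_lb: "objective dd MM K mu c ws \<ge> y / S"
    unfolding objective_def
  proof (rule cInf_greatest)
    show "(\<lambda>l. \<Sum>a = 1..K. ws a / c a * dd (mu a) (l a)) ` alt_set MM K \<noteq> {}"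
      using alt_nonempty' by simp
  next
    fix t assume "t \<in> (\<lambda>l. \<Sum>a = 1..K. ws a / c a * dd (mu a) (l a)) ` alt_set MM K"
    then obtain l where l: "l \<in> alt_set MM K" "t = (\<Sum>a = 1..K. ws a / c a * dd (mu a) (l a))" by auto
    obtain a m where a: "a \<in> {2..K}" and m: "m \<in> MM"
      and le: "ws 1 / c 1 * dd (mu 1) m + ws a / c a * dd (mu a) m \<le> t"
      using LB'[OF wnn[OF simp] l(1)] l(2) by blast
    have "ws 1 / c 1 = 1 / S" "ws a / c a = X a / S"
      unfolding ws using cp[of 1] cp[of a] a K2 X1 by auto
    then have eq: "ws 1 / c 1 * dd (mu 1) m + ws a / c a * dd (mu a) m = (dd (mu 1) m + X a * dd (mu a) m) / S"
      by (simp add: add_divide_distrib)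
    have "y \<le> dd (mu 1) m + X a * dd (mu a) m"
      using g_le[OF mu1' muM[OF a] mult[OF a], of "X a" m] Xprop[OF a] m by simp
    then have "y / S \<le> (dd (mu 1) m + X a * dd (mu a) m) / S" using Spos by (simp add: divide_right_mono)
    then show "y / S \<le> t" using eq le by simp
  qed
  show "\<forall>w\<in>prob_simplex K. objective dd MM K mu c w \<le> objective dd MM K mu c ws"
    using obj_ub obj_lb by fastforce
  have objws: "objective dd MM K mu c ws = y / S" using obj_ub[OF simp] obj_lb by simp
  have ypos: "y > 0"
  proof (rule ccontr)
    assume "\<not> y > 0"
    then have "y = 0" using y0 by simp
    then show False using F1 F0 by simp
  qed
  show "\<forall>w\<in>prob_simplex K. objective dd MM K mu c w = objective dd MM K mu c ws
            \<longrightarrow> (\<forall>a\<in>{1..K}. w a = ws a)"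
  proof (rule ballI, rule impI)
    fix w assume w: "w \<in> prob_simplex K" and eqo: "objective dd MM K mu c w = objective dd MM K mu c ws"
    then have ow: "objective dd MM K mu c w = y / S" using objws by simp
    have Lge: "L w a \<ge> y / S" if "a \<in> {2..K}" for a using objL[OF w that] ow by simp
    have "(\<Sum>a=2..K. c a / B a * (L w a - y / S)) = (\<Sum>a=2..K. c a / B a * L w a) - Z * (y / S)"
      unfolding Z_def sum_distrib_right by (simp add: sum_subtractf right_diff_distrib)
    also have "\<dots> = 0" using ident[OF w] Zy by linarith
    moreover have "0 \<le> c a / B a * (L w a - y / S)" if a: "a \<in> {2..K}" for a
    proof -
      have "c a > 0" "B a > 0" using cp Bpos a by auto
      then show ?thesis using Lge[OF a] by simp
    qed
    ultimately have "\<forall>a\<in>{2..K}. c a / B a * (L w a - y / S) = 0"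
      using sum_nonneg_eq_0_iff[of "{2..K}" "\<lambda>a. c a / B a * (L w a - y / S)"] by auto
    have Leq: "L w a = y / S" if a: "a \<in> {2..K}" for a
    proof -
      have "c a > 0" "B a > 0" using cp Bpos a by auto
      moreover have "c a / B a * (L w a - y / S) = 0"
        using \<open>\<forall>a\<in>{2..K}. c a / B a * (L w a - y / S) = 0\<close> a by blast
      ultimately show ?thesis by simp
    qed
    have key: "w 1 / c 1 = 1 / S \<and> w a / c a = X a / S" if a: "a \<in> {2..K}" for a
    proof -
      define p1 where "p1 = w 1 / c 1"
      define pa where "pa = w a / c a"
      have "w 1 \<ge> 0" "w a \<ge> 0" "c 1 > 0" "c a > 0" using wnn[OF w] cp a K2 by auto
      then have p1: "p1 \<ge> 0" and pa: "pa \<ge> 0"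
        unfolding p1_def pa_def by auto
      have La: "L w a = p1 * A a + pa * B a" unfolding L_def p1_def pa_def ..
      have "y / S > 0" using ypos Spos by simp
      have ppos: "p1 + pa > 0"
      proof (rule ccontr)
        assume "\<not> p1 + pa > 0"
        then have "p1 = 0" "pa = 0" using p1 pa by linarith+
        then have "L w a = 0" using La by simp
        then show False using Leq[OF a] \<open>y / S > 0\<close> by linarith
      qed
      define mb where "mb = (p1 * mu 1 + pa * mu a) / (p1 + pa)"
      have "mb \<le> mu 1" unfolding mb_def using ppos pa mult[OF a]
        by (simp add: pos_divide_le_eq algebra_simps mult_left_mono)
      moreover have "mu a \<le> mb" unfolding mb_def using ppos p1 mult[OF a]
        by (simp add: pos_le_divide_eq algebra_simps mult_left_mono)
      ultimately have mbM: "mb \<in> MM" using M_interval[OF muM[OF a] mu1'] by simp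
      have ub: "y / S \<le> p1 * dd (mu 1) mb + pa * dd (mu a) mb"
        using UB'[OF wnn[OF w] a mbM] ow unfolding p1_def pa_def by simp
      have br: "p1 * A a + pa * B a = p1 * dd (mu 1) mb + pa * dd (mu a) mb + (p1 + pa) * dd mb (mm a)"
        unfolding A_def B_def mb_def using bregman[of p1 pa "mu 1" "mm a" "mu a"] ppos by simp
      have "(p1 + pa) * dd mb (mm a) \<le> 0" using ub br Leq[OF a] La by simp
      then have "dd mb (mm a) \<le> 0" using ppos by (simp add: mult_le_0_iff)
      then have "dd mb (mm a) = 0" using d_nonneg[OF mbM mmM[OF a]] by simp
      then have "mb = mm a" using d_zero_iff[OF mbM mmM[OF a]] by simp
      then have "(p1 * mu 1 + pa * mu a) / (p1 + pa) = (mu 1 + X a * mu a) / (1 + X a)"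
        unfolding mb_def mm_def mx_def .
      moreover have "1 + X a \<noteq> 0" using Xprop[OF a] by simp
      ultimately have "(p1 * mu 1 + pa * mu a) * (1 + X a) = (mu 1 + X a * mu a) * (p1 + pa)"
        using ppos by (simp add: frac_eq_eq)
      then have "(mu 1 - mu a) * (X a * p1 - pa) = 0" by (simp add: algebra_simps)
      then have paX: "pa = X a * p1" using mult[OF a] by simp
      have "L w a = p1 * y" using La gy[OF a] paX by (simp add: algebra_simps)
      then have "p1 * y = 1 / S * y" using Leq[OF a] by simp
      then have "p1 = 1 / S" using ypos by (metis mult_right_cancel less_irrefl)
      then show ?thesis using paX unfolding p1_def pa_def by simp
    qed
    show "\<forall>a\<in>{1..K}. w a = ws a"
    proof
      fix a assume a: "a \<in> {1..K}"
      show "w a = ws a"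
      proof (cases "a = 1")
        case True
        have "w 1 / c 1 = 1 / S" using key[of 2] K2 by auto
        moreover have "ws 1 = c 1 / S" unfolding ws X1 by simp
        ultimately show ?thesis using True cp[of 1] K2 by (simp add: field_simps)
      next
        case False
        then have a2: "a \<in> {2..K}" using a by auto
        have "w a / c a = X a / S" using key[OF a2] by auto
        then show ?thesis using cp[OF a] unfolding ws by (simp add: field_simps)
      qed
    qed
  qed
qed

end

end


context nefl
begin

context
  fixes K :: nat and mu c :: "nat \<Rightarrow> real"
  assumes K2: "K \<ge> 2"
    and means: "\<forall>a\<in>{1..K}. mu a \<in> MM"
    and best: "\<forall>a\<in>{2..K}. mu 1 > mu a"
    and cpos: "\<forall>a\<in>{1..K}. c a > 0"
begin

lemmas mu1'' = mu1[OF K2 means best cpos]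
lemmas muM' = muM[OF K2 means best cpos]
lemmas mult' = mult[OF K2 means best cpos]
lemmas F_eq' = F_eq[OF K2 means best cpos]
lemmas F0' = F0[OF K2 means best cpos]
lemmas opt' = opt[OF K2 means best cpos]

lemma exists_y: "\<exists>y. 0 \<le> y \<and> (\<forall>a\<in>{2..K}. y < dd (mu 1) (mu a)) \<and> F_fun dd K mu c y = 1"
proof -
  define DD where "DD a = dd (mu 1) (mu a)" for a
  have "Min (DD ` {2..K}) \<in> DD ` {2..K}" using K2 by (intro Min_in) auto
  then obtain a0 where a0: "a0 \<in> {2..K}" "DD a0 = Min (DD ` {2..K})" by auto
  have a0min: "DD a0 \<le> DD a" if "a \<in> {2..K}" for a
    using a0(2) that by (simp add: Min_le)
  have c1: "c 1 > 0" and ca0: "c a0 > 0" using cpos a0 K2 by auto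
  then have Cpos: "c a0 / c 1 > 0" by simp
  obtain X0 where X0: "X0 \<ge> 0"
    "dd (mu a0) (mx (mu 1) (mu a0) X0) \<le> c a0 / c 1 * dd (mu 1) (mx (mu 1) (mu a0) X0)"
    using ratio_exists[OF mu1'' muM'[OF a0(1)] mult'[OF a0(1)] Cpos] by blast
  define y1 where "y1 = g_fun dd (mu 1) (mu a0) X0"
  have y10: "y1 \<ge> 0" unfolding y1_def using g_nonneg[OF mu1'' muM'[OF a0(1)] mult'[OF a0(1)] X0(1)] .
  have y1lt0: "y1 < DD a0" unfolding y1_def DD_def using g_lt[OF mu1'' muM'[OF a0(1)] mult'[OF a0(1)] X0(1)] .
  have y1lt: "y1 < dd (mu 1) (mu a)" if "a \<in> {2..K}" for a
    using a0min[OF that] y1lt0 unfolding DD_def by simp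
  define h where "h a y = mx (mu 1) (mu a) (x_fun dd (mu 1) (mu a) y)" for a y
  have xprop: "x_fun dd (mu 1) (mu a) y \<ge> 0" if a: "a \<in> {2..K}" and y: "y \<in> {0..y1}" for a y
    using x_fun_prop[OF mu1'' muM'[OF a] mult'[OF a], of y] y y1lt[OF a] by auto
  have hM: "h a y \<in> MM" and hgt: "mu a < h a y" if a: "a \<in> {2..K}" and y: "y \<in> {0..y1}" for a y
    unfolding h_def using mx_M[OF mu1'' muM'[OF a] mult'[OF a] xprop[OF a y]]
      mx_bounds[OF mu1'' muM'[OF a] mult'[OF a] xprop[OF a y]] by auto
  have hcont: "continuous_on {0..y1} (h a)" if a: "a \<in> {2..K}" for a
  proof -
    define Xa where "Xa = x_fun dd (mu 1) (mu a) y1"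
    have Xa: "Xa \<ge> 0" "g_fun dd (mu 1) (mu a) Xa = y1"
      unfolding Xa_def using x_fun_prop[OF mu1'' muM'[OF a] mult'[OF a] y10 y1lt[OF a]] by auto
    have "continuous_on {0..y1} (x_fun dd (mu 1) (mu a))"
      using x_fun_cont[OF mu1'' muM'[OF a] mult'[OF a] Xa(1)] Xa(2) by simp
    then show ?thesis unfolding h_def
      by (rule continuous_on_compose2[OF mx_cont[OF mu1'' muM'[OF a] mult'[OF a]]]) (use xprop a in auto)
  qed
  have Fe: "F_fun dd K mu c = (\<lambda>y. \<Sum>a=2..K. c a * dd (mu 1) (h a y) / (c 1 * dd (mu a) (h a y)))"
    unfolding h_def by (rule ext) (rule F_eq')
  have Fcont: "continuous_on {0..y1} (F_fun dd K mu c)"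
    unfolding Fe
  proof (intro continuous_on_sum)
    fix a assume a: "a \<in> {2..K}"
    have c1': "continuous_on {0..y1} (\<lambda>y. dd (mu 1) (h a y))"
      by (rule continuous_on_compose2[OF d_conton hcont[OF a]]) (use hM a in auto)
    have c2': "continuous_on {0..y1} (\<lambda>y. dd (mu a) (h a y))"
      by (rule continuous_on_compose2[OF d_conton hcont[OF a]]) (use hM a in auto)
    have nz: "c 1 * dd (mu a) (h a y) \<noteq> 0" if "y \<in> {0..y1}" for y
      using d_pos[OF muM'[OF a] hM[OF a that]] hgt[OF a that] c1 by auto
    show "continuous_on {0..y1} (\<lambda>y. c a * dd (mu 1) (h a y) / (c 1 * dd (mu a) (h a y)))"
      using c1' c2' nz by (intro continuous_intros) auto
  qed
  have term_nn: "0 \<le> c a * dd (mu 1) (h a y) / (c 1 * dd (mu a) (h a y))"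
    if a: "a \<in> {2..K}" and y: "y \<in> {0..y1}" for a y
  proof -
    have "c a > 0" using cpos a by auto
    then show ?thesis using d_nonneg[OF mu1'' hM[OF a y]] d_nonneg[OF muM'[OF a] hM[OF a y]] c1 by simp
  qed
  have y1in: "y1 \<in> {0..y1}" using y10 by simp
  have ha0: "h a0 y1 = mx (mu 1) (mu a0) X0"
    unfolding h_def y1_def using x_fun_g[OF mu1'' muM'[OF a0(1)] mult'[OF a0(1)] X0(1)] by simp
  have "1 \<le> c a0 * dd (mu 1) (h a0 y1) / (c 1 * dd (mu a0) (h a0 y1))"
  proof -
    have B: "dd (mu a0) (h a0 y1) > 0"
      using d_pos[OF muM'[OF a0(1)] hM[OF a0(1) y1in]] hgt[OF a0(1) y1in] by auto
    have "c 1 * dd (mu a0) (h a0 y1) \<le> c a0 * dd (mu 1) (h a0 y1)"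
      using X0(2) c1 unfolding ha0 by (simp add: field_simps)
    then show ?thesis using B c1 by simp
  qed
  also have "\<dots> \<le> F_fun dd K mu c y1"
    unfolding Fe by (rule member_le_sum) (use a0 term_nn y1in in auto)
  finally have F1: "1 \<le> F_fun dd K mu c y1" .
  obtain y where y: "0 \<le> y" "y \<le> y1" "F_fun dd K mu c y = 1"
    using IVT'[of "F_fun dd K mu c" 0 1 y1] F0' F1 y10 Fcont by auto
  show ?thesis using y y1lt by (intro exI[of _ y]) force
qed

lemma S_pos:
  assumes y0: "0 \<le> y" and ylt: "\<forall>a\<in>{2..K}. y < dd (mu 1) (mu a)"
  shows "(\<Sum>b=1..K. c b * x_arm dd mu b y) > 0"
proof -
  have "(\<Sum>b=2..K. c b * x_arm dd mu b y) \<ge> 0"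
  proof (intro sum_nonneg)
    fix a assume a: "a \<in> {2..K}"
    have "x_arm dd mu a y = x_fun dd (mu 1) (mu a) y" using a unfolding x_arm_def by auto
    then have "x_arm dd mu a y \<ge> 0"
      using x_fun_prop[OF mu1'' muM'[OF a] mult'[OF a] y0] ylt a by auto
    moreover have "c a > 0" using cpos a by auto
    ultimately show "0 \<le> c a * x_arm dd mu a y" by simp
  qed
  moreover have "c 1 > 0" using cpos K2 by auto
  moreover have "x_arm dd mu 1 y = 1" unfolding x_arm_def by simp
  ultimately show ?thesis using sum_split1[of K "\<lambda>b. c b * x_arm dd mu b y"] K2 by simp
qed

lemma unique_y:
  assumes y: "0 \<le> y" "\<forall>a\<in>{2..K}. y < dd (mu 1) (mu a)" "F_fun dd K mu c y = 1"
    and y': "0 \<le> y'" "\<forall>a\<in>{2..K}. y' < dd (mu 1) (mu a)" "F_fun dd K mu c y' = 1"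
  shows "y' = y"
proof -
  let ?W = "opt_weights dd K mu c y" and ?W' = "opt_weights dd K mu c y'"
  note o = opt'[OF y] and o' = opt'[OF y']
  have "objective dd MM K mu c ?W' = objective dd MM K mu c ?W"
    using o(2) o'(2) o(1) o'(1) by (meson order_antisym)
  then have eqW: "\<forall>a\<in>{1..K}. ?W' a = ?W a" using o(3) o'(1) by blast
  define S where "S = (\<Sum>b=1..K. c b * x_arm dd mu b y)"
  define S' where "S' = (\<Sum>b=1..K. c b * x_arm dd mu b y')"
  have S: "S > 0" "S' > 0" unfolding S_def S'_def using S_pos y y' by auto
  have W: "?W a = c a * x_arm dd mu a y / S" "?W' a = c a * x_arm dd mu a y' / S'" for a
    unfolding opt_weights_def S_def S'_def by simp_all
  have c1: "c 1 > 0" and c2: "c 2 > 0" using cpos K2 by auto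
  have e1: "?W' 1 = ?W 1" using eqW K2 by auto
  have w1: "?W 1 = c 1 / S" and w1': "?W' 1 = c 1 / S'" using W[of 1] by (simp_all add: x_arm_def)
  have "c 1 / S' = c 1 / S" using e1 w1 w1' by metis
  then have SS: "S' = S" using c1 by (metis divide_cancel_left less_irrefl)
  have two: "(2::nat) \<in> {2..K}" using K2 by simp
  have "c 2 * x_arm dd mu 2 y' / S = c 2 * x_arm dd mu 2 y / S"
    using eqW[rule_format, of 2] K2 W[of 2] SS by simp
  then have "x_arm dd mu 2 y' = x_arm dd mu 2 y" using S c2 by (simp add: field_simps)
  then have X: "x_fun dd (mu 1) (mu 2) y' = x_fun dd (mu 1) (mu 2) y" unfolding x_arm_def by simp
  have "y' = g_fun dd (mu 1) (mu 2) (x_fun dd (mu 1) (mu 2) y')"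
    using x_fun_prop[OF mu1'' muM'[OF two] mult'[OF two] y'(1)] y'(2) two by auto
  also have "\<dots> = y"
    unfolding X using x_fun_prop[OF mu1'' muM'[OF two] mult'[OF two] y(1)] y(2) two by auto
  finally show ?thesis .
qed

end

end

theorem theorem4:
  fixes Theta :: "real set" and b b' :: "real \<Rightarrow> real" and K :: nat
    and \<mu> c :: "nat \<Rightarrow> real"
  defines "d \<equiv> nef_kl Theta b b'"
  defines "M \<equiv> b' ` Theta"
  assumes nef: "nef_cumulant Theta b b'"
    and K2: "K \<ge> 2"
    and means: "\<forall>a\<in>{1..K}. \<mu> a \<in> M"
    and best: "\<forall>a\<in>{2..K}. \<mu> 1 > \<mu> a"
    and cpos: "\<forall>a\<in>{1..K}. c a > 0"
  shows "\<exists>ystar.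
           (0 \<le> ystar \<and> (\<forall>a\<in>{2..K}. ystar < d (\<mu> 1) (\<mu> a)) \<and> F_fun d K \<mu> c ystar = 1) \<and>
           (\<forall>y. 0 \<le> y \<and> (\<forall>a\<in>{2..K}. y < d (\<mu> 1) (\<mu> a)) \<and> F_fun d K \<mu> c y = 1 \<longrightarrow> y = ystar) \<and>
           opt_weights d K \<mu> c ystar \<in> prob_simplex K \<and>
           (\<forall>w\<in>prob_simplex K. objective d M K \<mu> c w \<le> objective d M K \<mu> c (opt_weights d K \<mu> c ystar)) \<and>
           (\<forall>w\<in>prob_simplex K. objective d M K \<mu> c w = objective d M K \<mu> c (opt_weights d K \<mu> c ystar)
               \<longrightarrow> (\<forall>a\<in>{1..K}. w a = opt_weights d K \<mu> c ystar a))"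
proof -
  interpret nefl Theta b b' by (rule nefl.intro) (rule nef)
  have means': "\<forall>a\<in>{1..K}. \<mu> a \<in> b' ` Theta" using means unfolding M_def .
  obtain y where y: "0 \<le> y" "\<forall>a\<in>{2..K}. y < nef_kl Theta b b' (\<mu> 1) (\<mu> a)"
      "F_fun (nef_kl Theta b b') K \<mu> c y = 1"
    using exists_y[OF K2 means' best cpos] by blast
  note o = opt[OF K2 means' best cpos y]
  have u: "\<forall>y'. 0 \<le> y' \<and> (\<forall>a\<in>{2..K}. y' < nef_kl Theta b b' (\<mu> 1) (\<mu> a)) \<and> F_fun (nef_kl Theta b b') K \<mu> c y' = 1 \<longrightarrow> y' = y"
    using unique_y[OF K2 means' best cpos y] by blast
  show ?thesis unfolding d_def M_def
    using y u o by blast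
qed

end
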